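(* Let $(\Omega,\mathcal F,\mathbb P)$ be a probability space and let $\mathcal X$ be an ideal of $L^0$, equipped with a vector topology and the almost-sure order. Let $V_1:\mathbb R^N\to\mathcal X$ be weakly upper semicontinuous, and assume one of the following: (i) $\mathcal X=L^0$ equipped with the topology of convergence in probability; (ii) $\mathcal X$ is order continuous and $V_1$ is nondecreasing (componentwise order on $\mathbb R^N$, almost-sure order on $\mathcal X$). Then $V_1$ is upper semicontinuous.
   Context: $L^0$ is the space of equivalence classes (modulo a.s. equality) of real random variables on $(\Omega,\mathcal F,\mathbb P)$ with the a.s. partial order, $\mathcal X_+$ being the a.s. nonnegative elements. $\mathcal X\subset L^0$ is an ideal if it is a linear subspace that is solid ($X\in\mathcal X$ whenever $|X|\le|Y|$ a.s. for some $Y\in\mathcal X$) and $\max\{X,Y\}\in\mathcal X$ for all $X,Y\in\mathcal X$. $\mathcal X$ is order continuous if for all $(X_n)\subset\mathcal X$ and $X\in\mathcal X$ with $X_n\to X$ a.s. and $\sup_n|X_n|\in\mathcal X$, one has $X_n\to X$ in the topology of $\mathcal X$. $V_1$ is weakly upper semicontinuous if for all $(x_n)\subset\mathbb R^N$, $x\in\mathbb R^N$ with $x_n\to x$, $V_1(x)\ge\limsup_n V_1(x_n)$ a.s. $V_1$ is upper semicontinuous at $x$ if for every neighborhood $\mathcal U$ of $V_1(x)$ there exists a neighborhood $\mathcal V$ of $x$ with $V_1(\mathcal V)\subset\mathcal U-\mathcal X_+$, and upper semicontinuous if this holds at every $x$. *)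

theory Defs
  imports "HOL-Probability.Probability"
begin

text \<open>Elements of L^0 are represented by measurable real functions on the sample space;
  a.s. equality / order are expressed with AE. A set X of such functions is an
  ideal of L^0; a topology T on X is a topology on the quotient L^0/a.s., i.e. its
  open sets are saturated w.r.t. a.s. equality.\<close>

definition is_L0_ideal :: "'a measure \<Rightarrow> ('a \<Rightarrow> real) set \<Rightarrow> bool" where
  "is_L0_ideal M X \<longleftrightarrow>
     X \<subseteq> borel_measurable M \<and>
     (\<lambda>\<omega>. 0) \<in> X \<and>
     (\<forall>f\<in>X. \<forall>g\<in>X. (\<lambda>\<omega>. f \<omega> + g \<omega>) \<in> X) \<and>
     (\<forall>c::real. \<forall>f\<in>X. (\<lambda>\<omega>. c * f \<omega>) \<in> X) \<and>
     (\<forall>f\<in>borel_measurable M. \<forall>g\<in>X. (AE \<omega> in M. \<bar>f \<omega>\<bar> \<le> \<bar>g \<omega>\<bar>) \<longrightarrow> f \<in> X) \<and>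
     (\<forall>f\<in>X. \<forall>g\<in>X. (\<lambda>\<omega>. max (f \<omega>) (g \<omega>)) \<in> X)"

definition L0_vector_topology :: "'a measure \<Rightarrow> ('a \<Rightarrow> real) set \<Rightarrow> ('a \<Rightarrow> real) topology \<Rightarrow> bool" where
  "L0_vector_topology M X T \<longleftrightarrow>
     topspace T = X \<and>
     (\<forall>U f g. openin T U \<longrightarrow> f \<in> U \<longrightarrow> g \<in> X \<longrightarrow> (AE \<omega> in M. f \<omega> = g \<omega>) \<longrightarrow> g \<in> U) \<and>
     continuous_map (prod_topology T T) T (\<lambda>(f, g). (\<lambda>\<omega>. f \<omega> + g \<omega>)) \<and>
     continuous_map (prod_topology euclideanreal T) T (\<lambda>(c, f). (\<lambda>\<omega>. c * f \<omega>))"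

definition prob_dist :: "'a measure \<Rightarrow> ('a \<Rightarrow> real) \<Rightarrow> ('a \<Rightarrow> real) \<Rightarrow> real" where
  "prob_dist M f g = (\<integral>\<omega>. min \<bar>f \<omega> - g \<omega>\<bar> 1 \<partial>M)"

definition conv_in_prob_topology :: "'a measure \<Rightarrow> ('a \<Rightarrow> real) topology" where
  "conv_in_prob_topology M = topology (\<lambda>U. U \<subseteq> borel_measurable M \<and>
     (\<forall>f\<in>U. \<exists>e>0. \<forall>g\<in>borel_measurable M. prob_dist M f g < e \<longrightarrow> g \<in> U))"

definition L0_order_continuous :: "'a measure \<Rightarrow> ('a \<Rightarrow> real) set \<Rightarrow> ('a \<Rightarrow> real) topology \<Rightarrow> bool" where
  "L0_order_continuous M X T \<longleftrightarrow>
     (\<forall>Xs Y. (\<forall>n. Xs n \<in> X) \<longrightarrow> Y \<in> X \<longrightarrow>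
        (AE \<omega> in M. (\<lambda>n. Xs n \<omega>) \<longlonglongrightarrow> Y \<omega>) \<longrightarrow>
        (AE \<omega> in M. bdd_above (range (\<lambda>n. \<bar>Xs n \<omega>\<bar>))) \<longrightarrow>
        (\<lambda>\<omega>. SUP n. \<bar>Xs n \<omega>\<bar>) \<in> X \<longrightarrow>
        limitin T Xs Y sequentially)"

definition weakly_usc :: "'a measure \<Rightarrow> (real^'n \<Rightarrow> 'a \<Rightarrow> real) \<Rightarrow> bool" where
  "weakly_usc M V \<longleftrightarrow>
     (\<forall>xs x. xs \<longlonglongrightarrow> x \<longrightarrow>
        (AE \<omega> in M. limsup (\<lambda>n. ereal (V (xs n) \<omega>)) \<le> ereal (V x \<omega>)))"

definition nondecreasing_L0 :: "'a measure \<Rightarrow> (real^'n \<Rightarrow> 'a \<Rightarrow> real) \<Rightarrow> bool" where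
  "nondecreasing_L0 M V \<longleftrightarrow>
     (\<forall>x y. (\<forall>i. x $ i \<le> y $ i) \<longrightarrow> (AE \<omega> in M. V x \<omega> \<le> V y \<omega>))"

definition usc_at :: "'a measure \<Rightarrow> ('a \<Rightarrow> real) set \<Rightarrow> ('a \<Rightarrow> real) topology \<Rightarrow>
    (real^'n \<Rightarrow> 'a \<Rightarrow> real) \<Rightarrow> real^'n \<Rightarrow> bool" where
  "usc_at M X T V x \<longleftrightarrow>
     (\<forall>U. openin T U \<longrightarrow> V x \<in> U \<longrightarrow>
        (\<exists>W. open W \<and> x \<in> W \<and>
           (\<forall>y\<in>W. \<exists>u\<in>U. \<exists>p\<in>X. (AE \<omega> in M. 0 \<le> p \<omega>) \<and>
                (AE \<omega> in M. V y \<omega> = u \<omega> - p \<omega>))))"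

definition usc_L0 :: "'a measure \<Rightarrow> ('a \<Rightarrow> real) set \<Rightarrow> ('a \<Rightarrow> real) topology \<Rightarrow>
    (real^'n \<Rightarrow> 'a \<Rightarrow> real) \<Rightarrow> bool" where
  "usc_L0 M X T V \<longleftrightarrow> (\<forall>x. usc_at M X T V x)"

end

theory Submission
  imports Defs
begin

lemma conv_open:
  assumes "openin (conv_in_prob_topology M) U"
  shows "U \<subseteq> borel_measurable M \<and> (\<forall>f\<in>U. \<exists>e>0. \<forall>g\<in>borel_measurable M. prob_dist M f g < e \<longrightarrow> g \<in> U)"
proof -
  let ?P = "\<lambda>U. U \<subseteq> borel_measurable M \<and>
     (\<forall>f\<in>U. \<exists>e>0. \<forall>g\<in>borel_measurable M. prob_dist M f g < e \<longrightarrow> g \<in> U)"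
  have "istopology ?P"
    unfolding istopology_def
  proof (rule conjI; intro allI impI)
    fix S T assume S: "?P S" and T: "?P T"
    have 1: "S \<inter> T \<subseteq> borel_measurable M" using S by blast
    have 2: "\<forall>f\<in>S \<inter> T. \<exists>e>0. \<forall>g\<in>borel_measurable M. prob_dist M f g < e \<longrightarrow> g \<in> S \<inter> T"
    proof
      fix f assume f: "f \<in> S \<inter> T"
      obtain e1 where e1: "e1 > 0" "\<forall>g\<in>borel_measurable M. prob_dist M f g < e1 \<longrightarrow> g \<in> S"
        using S f by blast
      obtain e2 where e2: "e2 > 0" "\<forall>g\<in>borel_measurable M. prob_dist M f g < e2 \<longrightarrow> g \<in> T"
        using T f by blast
      show "\<exists>e>0. \<forall>g\<in>borel_measurable M. prob_dist M f g < e \<longrightarrow> g \<in> S \<inter> T"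
        by (rule exI[of _ "min e1 e2"]) (use e1 e2 in auto)
    qed
    show "?P (S \<inter> T)" using 1 2 by blast
  next
    fix K assume K: "\<forall>S\<in>K. ?P S"
    have 1: "\<Union>K \<subseteq> borel_measurable M" using K by blast
    have 2: "\<forall>f\<in>\<Union>K. \<exists>e>0. \<forall>g\<in>borel_measurable M. prob_dist M f g < e \<longrightarrow> g \<in> \<Union>K"
    proof
      fix f assume "f \<in> \<Union>K"
      then obtain S where "S \<in> K" "f \<in> S" by blast
      then obtain e where "e > 0" "\<forall>g\<in>borel_measurable M. prob_dist M f g < e \<longrightarrow> g \<in> S"
        using K by blast
      then show "\<exists>e>0. \<forall>g\<in>borel_measurable M. prob_dist M f g < e \<longrightarrow> g \<in> \<Union>K"
        using \<open>S \<in> K\<close> by blast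
    qed
    show "?P (\<Union>K)" using 1 2 by blast
  qed
  then show ?thesis using assms unfolding conv_in_prob_topology_def by (auto intro!: always_eventually)
qed

lemma limsup_max:
  assumes "limsup (\<lambda>n. ereal (a n)) \<le> ereal b"
  shows "(\<lambda>n. max (a n - b) 0) \<longlonglongrightarrow> 0"
proof (rule order_tendstoI)
  fix c :: real assume "c < 0" then show "\<forall>\<^sub>F n in sequentially. c < max (a n - b) 0" by (auto intro!: always_eventually)
next
  fix c :: real assume c: "0 < c"
  have "ereal b < ereal (b + c)" using c by simp
  with assms have "limsup (\<lambda>n. ereal (a n)) < ereal (b + c)" by (rule le_less_trans)
  then have "\<forall>\<^sub>F n in sequentially. ereal (a n) < ereal (b + c)" by (rule Limsup_lessD)
  then show "\<forall>\<^sub>F n in sequentially. max (a n - b) 0 < c"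
    by eventually_elim (use c in auto)
qed


theorem mainTheorem12:
  fixes M :: "'a measure" and X :: "('a \<Rightarrow> real) set" and T :: "('a \<Rightarrow> real) topology"
    and V :: "real^'n \<Rightarrow> 'a \<Rightarrow> real"
  assumes "prob_space M"
    and "is_L0_ideal M X"
    and "L0_vector_topology M X T"
    and "\<forall>x. V x \<in> X"
    and "weakly_usc M V"
    and "(X = borel_measurable M \<and> T = conv_in_prob_topology M)
         \<or> (L0_order_continuous M X T \<and> nondecreasing_L0 M V)"
  shows "usc_L0 M X T V"
proof -
  interpret P: prob_space M by fact
  note L = assms(2)[unfolded is_L0_ideal_def]
  have Xbm: "X \<subseteq> borel_measurable M" using L by blast
  have X0: "(\<lambda>\<omega>. 0) \<in> X" using L by blast
  have Xadd: "\<And>f g. f \<in> X \<Longrightarrow> g \<in> X \<Longrightarrow> (\<lambda>\<omega>. f \<omega> + g \<omega>) \<in> X" using L by blast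
  have Xmul: "\<And>c f. f \<in> X \<Longrightarrow> (\<lambda>\<omega>. c * f \<omega>) \<in> X" using L by blast
  have Xsolid: "\<And>f g. f \<in> borel_measurable M \<Longrightarrow> g \<in> X \<Longrightarrow> (AE \<omega> in M. \<bar>f \<omega>\<bar> \<le> \<bar>g \<omega>\<bar>) \<Longrightarrow> f \<in> X"
    using L by blast
  have Vm: "\<And>y. V y \<in> borel_measurable M" using assms(4) Xbm by blast
  have Xdiff: "\<And>f g. f \<in> X \<Longrightarrow> g \<in> X \<Longrightarrow> (\<lambda>\<omega>. f \<omega> - g \<omega>) \<in> X"
  proof -
    fix f g assume "f \<in> X" "g \<in> X"
    then have "(\<lambda>\<omega>. f \<omega> + (\<lambda>\<omega>. (-1) * g \<omega>) \<omega>) \<in> X" using Xadd Xmul by blast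
    then show "(\<lambda>\<omega>. f \<omega> - g \<omega>) \<in> X" by simp
  qed
  have wusc: "\<And>xs x. xs \<longlonglongrightarrow> x \<Longrightarrow> AE \<omega> in M. limsup (\<lambda>n. ereal (V (xs n) \<omega>)) \<le> ereal (V x \<omega>)"
    using assms(5) unfolding weakly_usc_def by blast
  from assms(6) consider (i) "X = borel_measurable M" "T = conv_in_prob_topology M"
    | (ii) "L0_order_continuous M X T" "nondecreasing_L0 M V" by blast
  then show ?thesis
  proof cases
    case i
    show ?thesis
    proof (rule ccontr)
      assume "\<not> usc_L0 M X T V"
      then obtain x where "\<not> usc_at M X T V x" using usc_L0_def by metis
      then obtain U where U: "openin T U" "V x \<in> U" and
        nW: "\<And>W. open W \<Longrightarrow> x \<in> W \<Longrightarrow> \<exists>y\<in>W. \<not> (\<exists>u\<in>U. \<exists>p\<in>X. (AE \<omega> in M. 0 \<le> p \<omega>) \<and>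
                (AE \<omega> in M. V y \<omega> = u \<omega> - p \<omega>))"
        unfolding usc_at_def by meson
      have Uo: "U \<subseteq> borel_measurable M \<and> (\<forall>f\<in>U. \<exists>e>0. \<forall>g\<in>borel_measurable M. prob_dist M f g < e \<longrightarrow> g \<in> U)"
        using conv_open U(1) i(2) by blast
      then obtain e where e: "e > 0" "\<And>g. g \<in> borel_measurable M \<Longrightarrow> prob_dist M (V x) g < e \<Longrightarrow> g \<in> U"
        using U(2) by blast
      define Q where "Q = (\<lambda>y. \<not> (\<exists>u\<in>U. \<exists>p\<in>X. (AE \<omega> in M. 0 \<le> p \<omega>) \<and>
                (AE \<omega> in M. V y \<omega> = u \<omega> - p \<omega>)))"
      have "\<forall>n. \<exists>y. y \<in> ball x (inverse (real (Suc n))) \<and> Q y"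
      proof
        fix n
        have "open (ball x (inverse (real (Suc n))))" "x \<in> ball x (inverse (real (Suc n)))" by auto
        from nW[OF this] show "\<exists>y. y \<in> ball x (inverse (real (Suc n))) \<and> Q y" unfolding Q_def by blast
      qed
      then have "\<exists>y. \<forall>n. y n \<in> ball x (inverse (real (Suc n))) \<and> Q (y n)" by (rule choice)
      then obtain y where yy: "\<forall>n. y n \<in> ball x (inverse (real (Suc n))) \<and> Q (y n)" by (elim exE)
      have y: "\<And>n. y n \<in> ball x (inverse (real (Suc n)))"
        "\<And>n. \<not> (\<exists>u\<in>U. \<exists>p\<in>X. (AE \<omega> in M. 0 \<le> p \<omega>) \<and>
                (AE \<omega> in M. V (y n) \<omega> = u \<omega> - p \<omega>))"
        using yy unfolding Q_def by blast+
      have "(\<lambda>n. dist (y n) x) \<longlonglongrightarrow> 0"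
      proof (rule Lim_null_comparison)
        show "\<forall>\<^sub>F n in sequentially. norm (dist (y n) x) \<le> inverse (real (Suc n))"
          using y(1) by (auto simp: dist_commute less_imp_le)
        show "(\<lambda>n. inverse (real (Suc n))) \<longlonglongrightarrow> 0" by (rule LIMSEQ_inverse_real_of_nat)
      qed
      then have yx: "y \<longlonglongrightarrow> x" using tendsto_dist_iff by blast
      define u where "u n = (\<lambda>\<omega>. max (V (y n) \<omega>) (V x \<omega>))" for n
      have um: "\<And>n. u n \<in> borel_measurable M" unfolding u_def using Vm by measurable
      have lim: "(\<lambda>n. prob_dist M (V x) (u n)) \<longlonglongrightarrow> integral\<^sup>L M (\<lambda>_. 0::real)"
        unfolding prob_dist_def
      proof (rule integral_dominated_convergence[where w="\<lambda>_. 1"])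
        show "(\<lambda>_. 0::real) \<in> borel_measurable M" by simp
        show "\<And>n. (\<lambda>\<omega>. min \<bar>V x \<omega> - u n \<omega>\<bar> 1) \<in> borel_measurable M"
          using Vm um by measurable
        show "integrable M (\<lambda>_. 1::real)" by simp
        show "\<And>n. AE \<omega> in M. norm (min \<bar>V x \<omega> - u n \<omega>\<bar> 1) \<le> 1" by simp
        show "AE \<omega> in M. (\<lambda>n. min \<bar>V x \<omega> - u n \<omega>\<bar> 1) \<longlonglongrightarrow> 0"
          using wusc[OF yx]
        proof eventually_elim
          case (elim \<omega>)
          have "(\<lambda>n. min (max (V (y n) \<omega> - V x \<omega>) 0) 1) \<longlonglongrightarrow> min 0 1"
            by (intro tendsto_min limsup_max elim tendsto_const)
          moreover have "\<And>n. min \<bar>V x \<omega> - u n \<omega>\<bar> 1 = min (max (V (y n) \<omega> - V x \<omega>) 0) 1"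
            unfolding u_def by auto
          ultimately show ?case by simp
        qed
      qed
      then have "(\<lambda>n. prob_dist M (V x) (u n)) \<longlonglongrightarrow> 0" by simp
      then have "\<forall>\<^sub>F n in sequentially. prob_dist M (V x) (u n) < e"
        using e(1) by (rule order_tendstoD)
      then obtain N where "prob_dist M (V x) (u N) < e" unfolding eventually_sequentially by blast
      then have uN: "u N \<in> U" using e(2) um by blast
      have "(\<lambda>\<omega>. u N \<omega> - V (y N) \<omega>) \<in> X" unfolding i(1) using um Vm by measurable
      moreover have "AE \<omega> in M. 0 \<le> u N \<omega> - V (y N) \<omega>" unfolding u_def by simp
      moreover have "AE \<omega> in M. V (y N) \<omega> = u N \<omega> - (u N \<omega> - V (y N) \<omega>)" by simp
      ultimately have "\<exists>u\<in>U. \<exists>p\<in>X. (AE \<omega> in M. 0 \<le> p \<omega>) \<and>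
                (AE \<omega> in M. V (y N) \<omega> = u \<omega> - p \<omega>)"
        using uN by (intro bexI[of _ "u N"] bexI[of _ "\<lambda>\<omega>. u N \<omega> - V (y N) \<omega>"] conjI)
      then show False using y(2)[of N] by (rule notE[rotated])
    qed
  next
    case ii
    have oc: "\<And>Xs Y. (\<forall>n. Xs n \<in> X) \<Longrightarrow> Y \<in> X \<Longrightarrow>
        (AE \<omega> in M. (\<lambda>n. Xs n \<omega>) \<longlonglongrightarrow> Y \<omega>) \<Longrightarrow>
        (AE \<omega> in M. bdd_above (range (\<lambda>n. \<bar>Xs n \<omega>\<bar>))) \<Longrightarrow>
        (\<lambda>\<omega>. SUP n. \<bar>Xs n \<omega>\<bar>) \<in> X \<Longrightarrow> limitin T Xs Y sequentially"
      using ii(1) unfolding L0_order_continuous_def by blast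
    have nd: "\<And>x y. (\<And>i. x $ i \<le> y $ i) \<Longrightarrow> AE \<omega> in M. V x \<omega> \<le> V y \<omega>"
      using ii(2) unfolding nondecreasing_L0_def by blast
    have Xabs: "\<And>f. f \<in> X \<Longrightarrow> (\<lambda>\<omega>. \<bar>f \<omega>\<bar>) \<in> X"
    proof -
      fix f assume f: "f \<in> X"
      then have "f \<in> borel_measurable M" using Xbm by blast
      then have "(\<lambda>\<omega>. \<bar>f \<omega>\<bar>) \<in> borel_measurable M" by measurable
      then show "(\<lambda>\<omega>. \<bar>f \<omega>\<bar>) \<in> X" using Xsolid f by simp
    qed
    show ?thesis unfolding usc_L0_def usc_at_def
    proof (intro allI impI)
      fix x U assume U: "openin T U" "V x \<in> U"
      define z where "z n = x + (\<chi> i. inverse (real (Suc n)))" for n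
      define g where "g = (\<lambda>\<omega>. max (V (z 0) \<omega>) (V x \<omega>))"
      define u where "u n = (\<lambda>\<omega>. min (max (V (z n) \<omega>) (V x \<omega>)) (g \<omega>))" for n
      define B where "B = (\<lambda>\<omega>. \<bar>V (z 0) \<omega>\<bar> + \<bar>V x \<omega>\<bar>)"
      have BX: "B \<in> X" unfolding B_def using Xadd Xabs assms(4) by blast
      have Bb: "\<And>n \<omega>. \<bar>u n \<omega>\<bar> \<le> B \<omega>" unfolding u_def g_def B_def by auto
      have um: "\<And>n. u n \<in> borel_measurable M" unfolding u_def g_def using Vm by measurable
      have uX: "\<And>n. u n \<in> X"
        using Xsolid[OF um BX] Bb by (auto simp: B_def)
      have zle: "\<And>n. AE \<omega> in M. V (z n) \<omega> \<le> V (z 0) \<omega>"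
        by (rule nd) (simp add: z_def inverse_le_1_iff)
      have zlim: "z \<longlonglongrightarrow> x"
      proof (rule vec_tendstoI)
        fix i
        have "(\<lambda>n. x $ i + inverse (real (Suc n))) \<longlonglongrightarrow> x $ i + 0"
          by (intro tendsto_add tendsto_const LIMSEQ_inverse_real_of_nat)
        then show "(\<lambda>n. z n $ i) \<longlonglongrightarrow> x $ i" by (simp add: z_def)
      qed
      have zall: "AE \<omega> in M. \<forall>n. V (z n) \<omega> \<le> V (z 0) \<omega>"
        using zle by (simp add: AE_all_countable)
      have lim: "AE \<omega> in M. (\<lambda>n. u n \<omega>) \<longlonglongrightarrow> V x \<omega>"
        using wusc[OF zlim] zall
      proof eventually_elim
        case (elim \<omega>)
        have "(\<lambda>n. V x \<omega> + max (V (z n) \<omega> - V x \<omega>) 0) \<longlonglongrightarrow> V x \<omega> + 0"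
          by (intro tendsto_add tendsto_const limsup_max elim)
        moreover have "u n \<omega> = V x \<omega> + max (V (z n) \<omega> - V x \<omega>) 0" for n
          using elim(2)[rule_format, of n] unfolding u_def g_def by (auto simp: max_def min_def)
        ultimately show ?case by simp
      qed
      have bdd: "\<And>\<omega>. bdd_above (range (\<lambda>n. \<bar>u n \<omega>\<bar>))"
        using Bb by (intro bdd_aboveI2) 
      have Sm: "(\<lambda>\<omega>. SUP n. \<bar>u n \<omega>\<bar>) \<in> borel_measurable M"
        using um bdd by (intro borel_measurable_cSUP) auto
      have Sle: "\<And>\<omega>. \<bar>SUP n. \<bar>u n \<omega>\<bar>\<bar> \<le> \<bar>B \<omega>\<bar>"
      proof -
        fix \<omega>
        have "0 \<le> \<bar>u 0 \<omega>\<bar>" by simp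
        also have "\<dots> \<le> (SUP n. \<bar>u n \<omega>\<bar>)" by (rule cSUP_upper[OF UNIV_I bdd])
        finally have 0: "0 \<le> (SUP n. \<bar>u n \<omega>\<bar>)" .
        have "(SUP n. \<bar>u n \<omega>\<bar>) \<le> B \<omega>" using Bb by (intro cSUP_least) auto
        with 0 show "\<bar>SUP n. \<bar>u n \<omega>\<bar>\<bar> \<le> \<bar>B \<omega>\<bar>" by simp
      qed
      have SX: "(\<lambda>\<omega>. SUP n. \<bar>u n \<omega>\<bar>) \<in> X"
        using Xsolid[OF Sm BX] Sle by simp
      have "limitin T u (V x) sequentially"
        using uX assms(4) lim bdd SX by (intro oc) auto
      then have "\<forall>\<^sub>F n in sequentially. u n \<in> U" using U unfolding limitin_def by blast
      then obtain N where uN: "u N \<in> U" unfolding eventually_sequentially by blast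
      show "\<exists>W. open W \<and> x \<in> W \<and>
           (\<forall>y\<in>W. \<exists>u\<in>U. \<exists>p\<in>X. (AE \<omega> in M. 0 \<le> p \<omega>) \<and>
                (AE \<omega> in M. V y \<omega> = u \<omega> - p \<omega>))"
      proof (intro exI conjI ballI)
        show "open (ball x (inverse (real (Suc N))))" by simp
        show "x \<in> ball x (inverse (real (Suc N)))" by simp
        fix y assume y: "y \<in> ball x (inverse (real (Suc N)))"
        have "\<And>i. y $ i \<le> z N $ i"
        proof -
          fix i
          have "\<bar>(y - x) $ i\<bar> \<le> norm (y - x)" by (rule component_le_norm_cart)
          also have "\<dots> < inverse (real (Suc N))" using y by (simp add: dist_norm norm_minus_commute)
          finally show "y $ i \<le> z N $ i" by (simp add: z_def)
        qed
        then have "AE \<omega> in M. V y \<omega> \<le> V (z N) \<omega>" by (rule nd)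
        then have pos: "AE \<omega> in M. 0 \<le> u N \<omega> - V y \<omega>" using zle[of N]
          by eventually_elim (auto simp: u_def g_def)
        have pX: "(\<lambda>\<omega>. u N \<omega> - V y \<omega>) \<in> X" using Xdiff uX assms(4) by blast
        have "AE \<omega> in M. V y \<omega> = u N \<omega> - (u N \<omega> - V y \<omega>)" by simp
        with pos pX uN show "\<exists>u\<in>U. \<exists>p\<in>X. (AE \<omega> in M. 0 \<le> p \<omega>) \<and>
                (AE \<omega> in M. V y \<omega> = u \<omega> - p \<omega>)"
          by (intro bexI[of _ "u N"] bexI[of _ "\<lambda>\<omega>. u N \<omega> - V y \<omega>"] conjI)
      qed
    qed
  qed
qed
end
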